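(* In the setting below, let $B_t = \{i \in [n] : \tilde{x}_i\tilde{w}_t \leq -\frac{1}{2}\gamma\hat{w}_t\}$. If $\eta \geq \eta_0$, then for every integer $0\le t < \tau$, $$\left(1 - \frac{16}{\eta^3}\right)G(w_t) \leq \frac{1}{n}\sum_{i \in B_t}\frac{1}{\exp(a_t^i)+1} \leq G(w_t).$$
   Context: Dimension $d=2$. Data $x_1,\dots,x_n\in\mathbb{R}^2$ with $\|x_i\|\le 1$, linearly separable (some $w$ has $\langle w,x_i\rangle>0$ for all $i$). $F(w) = \frac{1}{n}\sum_{i=1}^n \log(1+\exp(-\langle w, x_i\rangle))$ and $G(w) = \frac{1}{n}\sum_{i=1}^n \frac{1}{\exp(\langle w, x_i\rangle)+1}$. Maximum margin $\gamma = \max_{\|w\|=1}\min_i \langle w, x_i\rangle$ with maximizer the unit vector $w_*$; $v_*$ is a fixed unit vector orthogonal to $w_*$. Gradient descent: $w_0=0$, $w_{t+1} = w_t - \eta\nabla F(w_t)$ with constant $\eta>0$. $\hat{w}_t = \langle w_t, w_*\rangle$, $\tilde{w}_t = \langle w_t, v_*\rangle$, $\tilde{x}_i = \langle x_i, v_*\rangle$, $a_t^i = \langle w_t, x_i\rangle$. $\tau = \min\{t\ge 0: F(w_t)\le 1/(8\eta)\}$. $\eta_0 = \max(n, \frac{32}{\gamma^2}\log\frac{256}{\gamma^2})$. *)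

theory Defs
  imports "HOL-Analysis.Analysis"
begin

definition logF :: "nat \<Rightarrow> (nat \<Rightarrow> real^2) \<Rightarrow> real^2 \<Rightarrow> real" where
  "logF n x w = (1 / real n) * (\<Sum>i<n. ln (1 + exp (- (w \<bullet> x i))))"

definition lossG :: "nat \<Rightarrow> (nat \<Rightarrow> real^2) \<Rightarrow> real^2 \<Rightarrow> real" where
  "lossG n x w = (1 / real n) * (\<Sum>i<n. 1 / (exp (w \<bullet> x i) + 1))"

definition margin :: "nat \<Rightarrow> (nat \<Rightarrow> real^2) \<Rightarrow> real^2 \<Rightarrow> real" where
  "margin n x u = Min ((\<lambda>i. u \<bullet> x i) ` {..<n})"

definition max_margin :: "nat \<Rightarrow> (nat \<Rightarrow> real^2) \<Rightarrow> real" where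
  "max_margin n x = (SUP u\<in>{u. norm u = 1}. margin n x u)"

end

theory Submission imports Defs begin

lemma term_deriv: "((\<lambda>w. ln (1 + exp (- (w \<bullet> (a::real^2))))) has_derivative (\<lambda>h. - (h \<bullet> a) / (exp (w \<bullet> a) + 1))) (at w)"
proof -
  have "((\<lambda>w. ln (1 + exp (- (w \<bullet> (a::real^2))))) has_derivative (\<lambda>h. (exp (- (w \<bullet> a)) * (- (h \<bullet> a))) / (1 + exp (- (w \<bullet> a))))) (at w)"
    by (auto intro!: derivative_eq_intros ext simp: add_pos_pos divide_inverse)
  moreover have "(\<lambda>h. (exp (- (w \<bullet> a)) * (- (h \<bullet> a))) / (1 + exp (- (w \<bullet> a)))) = (\<lambda>h. - (h \<bullet> a) / (exp (w \<bullet> a) + 1))"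
  proof
    fix h
    have "exp (w \<bullet> a) * exp (- (w \<bullet> a)) = 1" by (simp add: exp_minus)
    have E: "exp (w \<bullet> a) > 0" by simp
    show "(exp (- (w \<bullet> a)) * (- (h \<bullet> a))) / (1 + exp (- (w \<bullet> a))) = - (h \<bullet> a) / (exp (w \<bullet> a) + 1)"
      using E by (simp add: exp_minus field_simps add_pos_pos)
  qed
  ultimately show ?thesis by simp
qed

definition gradF :: "nat \<Rightarrow> (nat \<Rightarrow> real^2) \<Rightarrow> real^2 \<Rightarrow> real^2" where
  "gradF n x w = - ((1 / real n) *\<^sub>R (\<Sum>i<n. (1 / (exp (w \<bullet> x i) + 1)) *\<^sub>R x i))"

lemma logF_grad: "GDERIV (logF n x) w :> gradF n x w"
proof -
  have "((\<lambda>w. \<Sum>i<n. ln (1 + exp (- (w \<bullet> x i)))) has_derivative (\<lambda>h. \<Sum>i<n. - (h \<bullet> x i) / (exp (w \<bullet> x i) + 1))) (at w)"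
    by (intro has_derivative_sum term_deriv)
  then have "((\<lambda>w. (1 / real n) * (\<Sum>i<n. ln (1 + exp (- (w \<bullet> x i))))) has_derivative (\<lambda>h. (1 / real n) * (\<Sum>i<n. - (h \<bullet> x i) / (exp (w \<bullet> x i) + 1)))) (at w)"
    by (intro has_derivative_mult_right)
  moreover have "(\<lambda>h. (1 / real n) * (\<Sum>i<n. - (h \<bullet> x i) / (exp (w \<bullet> x i) + 1))) = (\<lambda>h. h \<bullet> gradF n x w)"
    by (auto simp: gradF_def inner_sum_right sum_negf inner_minus_right sum_divide_distrib[symmetric] intro!: ext sum.cong)
  ultimately show ?thesis unfolding logF_def[abs_def] gderiv_def by simp
qed

lemma grad_unique:
  assumes "GDERIV f w :> g" "GDERIV f w :> g'" shows "g = (g' :: real^2)"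
proof -
  have "(\<lambda>h. h \<bullet> g) = (\<lambda>h. h \<bullet> g')" using has_derivative_unique assms unfolding gderiv_def by blast
  then have "(g - g') \<bullet> g = (g - g') \<bullet> g'" by metis
  then have "(g - g') \<bullet> (g - g') = 0" by (simp add: inner_diff_right)
  then show ?thesis by simp
qed

lemma decomp:
  fixes ws vs p q :: "real^2"
  assumes "norm ws = 1" "norm vs = 1" "ws \<bullet> vs = 0"
  shows "p \<bullet> q = (p \<bullet> ws) * (q \<bullet> ws) + (p \<bullet> vs) * (q \<bullet> vs)"
proof -
  define a where "a = ws$1"
  define b where "b = ws$2"
  define c where "c = vs$1"
  define d where "d = vs$2"
  have in2: "\<And>u v::real^2. u \<bullet> v = u$1 * v$1 + u$2 * v$2"
    by (simp add: inner_vec_def sum_2)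
  have n1: "a*a + b*b = 1" using assms(1) unfolding a_def b_def
    by (metis in2 norm_eq_1)
  have n2: "c*c + d*d = 1" using assms(2) unfolding c_def d_def
    by (metis in2 norm_eq_1)
  have o: "a*c = - (b*d)" using assms(3) unfolding a_def b_def c_def d_def by (simp add: in2 eq_neg_iff_add_eq_0)
  define l where "l = a*d - b*c"
  have hc: "c = - l * b"
  proof -
    have "c = c*(a*a+b*b)" using n1 by simp
    also have "\<dots> = a*(a*c) + b*b*c" by algebra
    also have "\<dots> = a*(-(b*d)) + b*b*c" using o by simp
    also have "\<dots> = - l * b" unfolding l_def by algebra
    finally show ?thesis .
  qed
  have o2: "b*d = - (a*c)" using o by simp
  have hd: "d = l * a"
  proof -
    have "d = d*(a*a+b*b)" using n1 by simp
    also have "\<dots> = a*a*d + b*(b*d)" by algebra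
    also have "\<dots> = a*a*d + b*(-(a*c))" using o2 by simp
    also have "\<dots> = l * a" unfolding l_def by algebra
    finally show ?thesis .
  qed
  have l2: "l*l = 1"
  proof -
    have "1 = c*c+d*d" using n2 by simp
    also have "\<dots> = l*l*(a*a+b*b)" unfolding hc hd by algebra
    finally show ?thesis using n1 by simp
  qed
  show ?thesis
    unfolding in2 a_def[symmetric] b_def[symmetric] c_def[symmetric] d_def[symmetric] hc hd
    using n1 l2 by algebra
qed


lemma log_ineq:
  fixes \<eta> g :: real
  assumes g0: "g > 0" and g1: "g \<le> 1" and eta: "\<eta> \<ge> 32 / g\<^sup>2 * ln (256 / g\<^sup>2)"
  shows "exp (- (\<eta> * g\<^sup>2 / 4)) \<le> 1 / \<eta> ^ 4"
proof -
  define c where "c = g\<^sup>2"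
  have c0: "c > 0" and c1: "c \<le> 1" using g0 g1 unfolding c_def by (auto simp: power_le_one)
  define L where "L = ln (256 / c)"
  have "256 / c > 1" using c0 c1 by (simp add: field_simps)
  then have L0: "L > 0" unfolding L_def by (simp add: ln_gt_zero)
  define s where "s = \<eta> * c / 32"
  have sL: "s \<ge> L" using eta c0 unfolding s_def L_def c_def by (simp add: field_simps)
  have s0: "s > 0" using sL L0 by simp
  have eta_eq: "\<eta> = 32 * s / c" using c0 unfolding s_def by simp
  have eta0: "\<eta> > 0" using s0 c0 eta_eq by simp
  have ln_eta: "ln \<eta> = ln 32 + ln s - ln c" using s0 c0 unfolding eta_eq by (simp add: ln_div ln_mult)
  have Leq: "L = ln 256 - ln c" using c0 unfolding L_def by (simp add: ln_div)
  have "ln (32::real) \<le> ln 256" by simp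
  moreover have "ln s \<le> s - 1" using s0 by (rule ln_le_minus_one)
  ultimately have "4 * ln \<eta> \<le> \<eta> * c / 4" using ln_eta Leq sL unfolding s_def by linarith
  then have "exp (- (\<eta> * c / 4)) \<le> exp (- (4 * ln \<eta>))" by simp
  also have "\<dots> = 1 / \<eta> ^ 4"
  proof -
    have "4 * ln \<eta> = ln (\<eta> ^ 4)" using eta0 by (simp add: ln_realpow)
    then have "exp (4 * ln \<eta>) = \<eta> ^ 4" using eta0 by simp
    then show ?thesis by (simp add: exp_minus divide_inverse)
  qed
  finally show ?thesis unfolding c_def .
qed

theorem lemma14:
  fixes n :: nat and x :: "nat \<Rightarrow> real^2" and \<eta> :: real
    and w :: "nat \<Rightarrow> real^2" and ws vs :: "real^2" and t :: nat
  assumes n_pos: "n > 0"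
    and x_norm: "\<forall>i<n. norm (x i) \<le> 1"
    and separable: "\<exists>u. \<forall>i<n. u \<bullet> x i > 0"
    and ws_unit: "norm ws = 1"
    and ws_max: "margin n x ws = max_margin n x"
    and vs_unit: "norm vs = 1"
    and vs_orth: "ws \<bullet> vs = 0"
    and eta_pos: "\<eta> > 0"
    and w0: "w 0 = 0"
    and gd: "\<forall>s. \<exists>g. GDERIV (logF n x) (w s) :> g \<and> w (Suc s) = w s - \<eta> *\<^sub>R g"
    and eta_large: "\<eta> \<ge> max (real n)
          (32 / (max_margin n x)\<^sup>2 * ln (256 / (max_margin n x)\<^sup>2))"
    and t_lt_tau: "\<forall>s\<le>t. logF n x (w s) > 1 / (8 * \<eta>)"
  shows "(1 - 16 / \<eta> ^ 3) * lossG n x (w t)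
           \<le> (1 / real n) * (\<Sum>i\<in>{i. i < n \<and>
                 (x i \<bullet> vs) * (w t \<bullet> vs) \<le> - (1/2) * max_margin n x * (w t \<bullet> ws)}.
                 1 / (exp (w t \<bullet> x i) + 1))
       \<and> (1 / real n) * (\<Sum>i\<in>{i. i < n \<and>
                 (x i \<bullet> vs) * (w t \<bullet> vs) \<le> - (1/2) * max_margin n x * (w t \<bullet> ws)}.
                 1 / (exp (w t \<bullet> x i) + 1))
           \<le> lossG n x (w t)"
proof -
  define \<gamma> where "\<gamma> = max_margin n x"
  have fin: "finite {..<n}" and ne: "{..<n} \<noteq> {}" using n_pos by auto
  have gam_ws: "\<gamma> = Min ((\<lambda>i. ws \<bullet> x i) ` {..<n})" using ws_max unfolding \<gamma>_def margin_def by simp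
  have xhat: "\<And>i. i < n \<Longrightarrow> \<gamma> \<le> x i \<bullet> ws"
    unfolding gam_ws by (subst inner_commute) (rule Min_le, auto)
  have g1: "\<gamma> \<le> 1"
  proof -
    have "\<gamma> \<le> x 0 \<bullet> ws" using xhat n_pos by simp
    also have "\<dots> \<le> norm (x 0) * norm ws" by (rule norm_cauchy_schwarz)
    also have "\<dots> \<le> 1" using x_norm n_pos ws_unit by simp
    finally show ?thesis .
  qed
  have g0: "\<gamma> > 0"
  proof -
    obtain u where u: "\<forall>i<n. u \<bullet> x i > 0" using separable by blast
    have "u \<noteq> 0" using u n_pos by auto
    define u' where "u' = u /\<^sub>R norm u"
    have nu: "norm u' = 1" using \<open>u \<noteq> 0\<close> unfolding u'_def by simp
    have "margin n x u' > 0" unfolding margin_def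
      using fin ne u \<open>u \<noteq> 0\<close> by (auto simp: Min_gr_iff u'_def)
    moreover have "bdd_above (margin n x ` {u. norm u = 1})"
    proof (rule bdd_aboveI2)
      fix v :: "real^2" assume "v \<in> {u. norm u = 1}"
      then have nv: "norm v = 1" by simp
      have "margin n x v \<le> v \<bullet> x 0" unfolding margin_def using n_pos by (intro Min_le) auto
      also have "\<dots> \<le> norm v * norm (x 0)" by (rule norm_cauchy_schwarz)
      also have "\<dots> \<le> 1" using x_norm n_pos nv by simp
      finally show "margin n x v \<le> 1" .
    qed
    ultimately have "margin n x u' \<le> \<gamma>" unfolding \<gamma>_def max_margin_def
      using nu by (intro cSUP_upper) auto
    with \<open>margin n x u' > 0\<close> show ?thesis by simp
  qed
  have eta_n: "\<eta> \<ge> real n" using eta_large by simp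
  have eta_big: "\<eta> \<ge> 32 / \<gamma>\<^sup>2 * ln (256 / \<gamma>\<^sup>2)" using eta_large unfolding \<gamma>_def by simp
  have expb: "exp (- (\<eta> * \<gamma>\<^sup>2 / 4)) \<le> 1 / \<eta> ^ 4" using log_ineq[OF g0 g1 eta_big] .
  have step: "\<And>s. w (Suc s) = w s - \<eta> *\<^sub>R gradF n x (w s)"
    using gd grad_unique logF_grad by metis
  have hat_step: "\<And>s. w (Suc s) \<bullet> ws = w s \<bullet> ws + (\<eta> / real n) * (\<Sum>i<n. (1 / (exp (w s \<bullet> x i) + 1)) * (x i \<bullet> ws))"
    unfolding step by (simp add: gradF_def inner_add_left inner_diff_left inner_sum_left sum_distrib_left)
  have sum_nn: "\<And>s. (\<Sum>i<n. (1 / (exp (w s \<bullet> x i) + 1)) * (x i \<bullet> ws)) \<ge> 0"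
  proof (intro sum_nonneg)
    fix s i assume "i \<in> {..<n}"
    then have "x i \<bullet> ws \<ge> 0" using xhat g0 by (meson lessThan_iff less_imp_le order_trans)
    then show "(1 / (exp (w s \<bullet> x i) + 1)) * (x i \<bullet> ws) \<ge> 0" by (simp add: add_pos_pos less_imp_le)
  qed
  have mono: "\<And>s. w s \<bullet> ws \<le> w (Suc s) \<bullet> ws"
    using hat_step sum_nn eta_pos n_pos by simp
  have hat1: "w (Suc 0) \<bullet> ws \<ge> \<eta> * \<gamma> / 2"
  proof -
    have "(\<Sum>i<n. (1 / (exp (w 0 \<bullet> x i) + 1)) * (x i \<bullet> ws)) \<ge> (\<Sum>i<n. \<gamma> / 2)"
      using xhat w0 by (intro sum_mono) simp
    then have "(\<Sum>i<n. (1 / (exp (w 0 \<bullet> x i) + 1)) * (x i \<bullet> ws)) \<ge> real n * \<gamma> / 2" by simp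
    then have "(\<eta> / real n) * (\<Sum>i<n. (1 / (exp (w 0 \<bullet> x i) + 1)) * (x i \<bullet> ws)) \<ge> (\<eta> / real n) * (real n * \<gamma> / 2)"
      using eta_pos n_pos by (intro mult_left_mono) auto
    then show ?thesis using hat_step[of 0] w0 n_pos by simp
  qed
  have hatk: "\<And>k. w (Suc k) \<bullet> ws \<ge> \<eta> * \<gamma> / 2"
  proof -
    fix k show "w (Suc k) \<bullet> ws \<ge> \<eta> * \<gamma> / 2"
      by (induction k) (use hat1 mono order_trans in blast)+
  qed
  define f where "f = (\<lambda>i. 1 / (exp (w t \<bullet> x i) + 1))"
  define P where "P = (\<lambda>i. (x i \<bullet> vs) * (w t \<bullet> vs) \<le> - (1/2) * max_margin n x * (w t \<bullet> ws))"
  have setB: "{i. i < n \<and> (x i \<bullet> vs) * (w t \<bullet> vs) \<le> - (1/2) * max_margin n x * (w t \<bullet> ws)} = {..<n} \<inter> {i. P i}"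
    unfolding P_def by auto
  have fpos: "\<And>i. f i > 0" unfolding f_def by (simp add: add_pos_pos)
  have Gdef: "lossG n x (w t) = (1 / real n) * sum f {..<n}" unfolding lossG_def f_def by simp
  have split: "sum f {..<n} = sum f ({..<n} \<inter> {i. P i}) + sum f ({..<n} - {i. P i})"
    by (rule sum.Int_Diff) simp
  have On: "sum f ({..<n} - {i. P i}) \<ge> 0" using fpos by (intro sum_nonneg) (simp add: less_imp_le)
  have upper: "(1 / real n) * sum f ({..<n} \<inter> {i. P i}) \<le> lossG n x (w t)"
    unfolding Gdef split using On n_pos by (simp add: distrib_left)
  have Gnn: "lossG n x (w t) \<ge> 0" unfolding Gdef using fpos by (simp add: sum_nonneg less_imp_le)
  have lower: "(1 - 16 / \<eta> ^ 3) * lossG n x (w t) \<le> (1 / real n) * sum f ({..<n} \<inter> {i. P i})"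
  proof (cases t)
    case 0
    have "{..<n} \<inter> {i. P i} = {..<n}" unfolding P_def using 0 w0 by auto
    have "(16 / \<eta> ^ 3) * lossG n x (w t) \<ge> 0" using Gnn eta_pos by simp
    then have "(1 - 16 / \<eta> ^ 3) * lossG n x (w t) \<le> lossG n x (w t)" by (simp add: algebra_simps)
    then show ?thesis using \<open>{..<n} \<inter> {i. P i} = {..<n}\<close> Gdef by simp
  next
    case (Suc k)
    have hatt: "w t \<bullet> ws \<ge> \<eta> * \<gamma> / 2" using hatk Suc by simp
    have hatt0: "w t \<bullet> ws \<ge> 0" proof -
      have "\<eta> * \<gamma> / 2 > 0" using eta_pos g0 by simp
      then show ?thesis using hatt by linarith
    qed
    have fO: "f i \<le> 1 / \<eta> ^ 4" if i: "i \<in> {..<n} - {i. P i}" for i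
    proof -
      have dec: "w t \<bullet> x i = (w t \<bullet> ws) * (x i \<bullet> ws) + (w t \<bullet> vs) * (x i \<bullet> vs)"
        by (rule decomp[OF ws_unit vs_unit vs_orth])
      have notP: "(x i \<bullet> vs) * (w t \<bullet> vs) > - (1/2) * \<gamma> * (w t \<bullet> ws)" using i unfolding P_def \<gamma>_def by auto
      have "(w t \<bullet> ws) * (x i \<bullet> ws) \<ge> (w t \<bullet> ws) * \<gamma>" using xhat i hatt0 by (intro mult_left_mono) auto
      then have a1: "w t \<bullet> x i \<ge> \<gamma> * (w t \<bullet> ws) / 2" using dec notP by (simp add: algebra_simps)
      have "\<gamma> * (w t \<bullet> ws) / 2 \<ge> \<gamma> * (\<eta> * \<gamma> / 2) / 2" using hatt g0 by (intro divide_right_mono mult_left_mono) auto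
      then have a2: "w t \<bullet> x i \<ge> \<eta> * \<gamma>\<^sup>2 / 4" using a1 by (simp add: power2_eq_square algebra_simps)
      have "f i \<le> exp (- (w t \<bullet> x i))" unfolding f_def
        by (simp add: exp_minus divide_inverse) (simp add: le_imp_inverse_le)
      also have "\<dots> \<le> exp (- (\<eta> * \<gamma>\<^sup>2 / 4))" using a2 by simp
      also have "\<dots> \<le> 1 / \<eta> ^ 4" by (rule expb)
      finally show ?thesis .
    qed
    have "sum f ({..<n} - {i. P i}) \<le> (\<Sum>i\<in>{..<n} - {i. P i}. 1 / \<eta> ^ 4)" using fO by (rule sum_mono)
    also have "\<dots> = real (card ({..<n} - {i. P i})) / \<eta> ^ 4" by simp
    also have "\<dots> \<le> real n / \<eta> ^ 4"
    proof -
      have "card ({..<n} - {i. P i}) \<le> card {..<n}" by (intro card_mono) auto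
      then show ?thesis using eta_pos by (intro divide_right_mono) auto
    qed
    finally have Obound: "(1 / real n) * sum f ({..<n} - {i. P i}) \<le> 1 / \<eta> ^ 4"
      using n_pos by (simp add: field_simps)
    have Gbig: "lossG n x (w t) > 1 / (16 * \<eta>)"
    proof (cases "\<exists>i<n. w t \<bullet> x i < 0")
      case True
      then obtain i where i: "i < n" "w t \<bullet> x i < 0" by blast
      have "exp (w t \<bullet> x i) < 1" using i(2) by simp
      then have "f i \<ge> 1/2" unfolding f_def by (simp add: field_simps add_pos_pos)
      moreover have "f i \<le> sum f {..<n}" using fpos i(1) by (intro member_le_sum) (auto simp: less_imp_le)
      ultimately have "sum f {..<n} \<ge> 1/2" by simp
      then have "lossG n x (w t) \<ge> 1 / (2 * real n)" unfolding Gdef using n_pos by (simp add: field_simps)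
      moreover have "1 / (2 * real n) \<ge> 1 / (2 * \<eta>)" using eta_n n_pos by (simp add: frac_le)
      moreover have "1 / (2 * \<eta>) > 1 / (16 * \<eta>)" using eta_pos by (simp add: frac_less2)
      ultimately show ?thesis by simp
    next
      case False
      have "ln (1 + exp (- (w t \<bullet> x i))) \<le> 2 * f i" if i: "i < n" for i
      proof -
        have a0: "w t \<bullet> x i \<ge> 0" using False i by (meson not_less)
        have "ln (1 + exp (- (w t \<bullet> x i))) \<le> exp (- (w t \<bullet> x i))" by (rule ln_add_one_self_le_self) simp
        also have "\<dots> \<le> 2 * f i"
        proof -
          have e1: "exp (w t \<bullet> x i) \<ge> 1" using a0 by simp
          have key: "\<And>E::real. E \<ge> 1 \<Longrightarrow> 1 / E \<le> 2 * (1 / (E + 1))" by (simp add: field_simps)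
          have "exp (- (w t \<bullet> x i)) = 1 / exp (w t \<bullet> x i)" by (simp add: exp_minus divide_inverse)
          then show ?thesis unfolding f_def using key[OF e1] by simp
        qed
        finally show ?thesis .
      qed
      then have "(\<Sum>i<n. ln (1 + exp (- (w t \<bullet> x i)))) \<le> (\<Sum>i<n. 2 * f i)" by (intro sum_mono) auto
      also have "(\<Sum>i<n. 2 * f i) = 2 * sum f {..<n}" by (simp add: sum_distrib_left)
      finally have "(\<Sum>i<n. ln (1 + exp (- (w t \<bullet> x i)))) \<le> 2 * sum f {..<n}" .
      then have "logF n x (w t) \<le> 2 * lossG n x (w t)" unfolding logF_def Gdef using n_pos
        by (simp add: field_simps)
      moreover have "logF n x (w t) > 1 / (8 * \<eta>)" using t_lt_tau by simp
      ultimately show ?thesis by simp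
    qed
    have "1 / \<eta> ^ 4 = (16 / \<eta> ^ 3) * (1 / (16 * \<eta>))" using eta_pos by (simp add: field_simps power_Suc[symmetric] del: power_Suc)
    also have "\<dots> \<le> (16 / \<eta> ^ 3) * lossG n x (w t)" using Gbig eta_pos by (intro mult_left_mono) auto
    finally have "(1 / real n) * sum f ({..<n} - {i. P i}) \<le> (16 / \<eta> ^ 3) * lossG n x (w t)" using Obound by simp
    then show ?thesis unfolding Gdef split by (simp add: algebra_simps)
  qed
  show ?thesis unfolding setB using lower upper unfolding f_def by simp
qed

end
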